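(* For all integers $n\geq 0$ and all real $x\in(0,\pi)$, $$\sum_{k=0}^{n}(n-k+1)\sin\bigl((2k+1/2)x\bigr)>0 .$$ *)

theory Defs
  imports Complex_Main
begin

end

theory Submission
  imports Defs
begin

lemma cos_diff_add: "cos (a - b) - cos (a + b) = 2 * sin a * sin (b::real)"
  by (simp add: cos_diff cos_add)

lemma sin_add_diff: "sin (a + b) - sin (a - b) = 2 * cos a * sin (b::real)"
  by (simp add: sin_diff sin_add)

lemma L0: "2 * sin (2*h) * (\<Sum>k<m. sin ((4 * real k + 1) * h)) = cos h - cos ((4 * real m - 1) * (h::real))"
proof (induction m)
  case 0
  then show ?case by simp
next
  case (Suc m)
  define a where "a = (4 * real m + 1) * h"
  have e1: "(4 * real m - 1) * h = a - 2*h" unfolding a_def by (simp add: algebra_simps)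
  have e2: "(4 * real (Suc m) - 1) * h = a + 2*h" unfolding a_def by (simp add: algebra_simps)
  have "2 * sin (2*h) * (\<Sum>k<Suc m. sin ((4 * real k + 1) * h))
      = (cos h - cos (a - 2*h)) + 2 * sin (2*h) * sin a"
  proof -
    have "(\<Sum>k<Suc m. sin ((4 * real k + 1) * h)) = (\<Sum>k<m. sin ((4 * real k + 1) * h)) + sin a"
      by (simp add: a_def)
    then show ?thesis using Suc.IH[unfolded e1] by (simp add: algebra_simps)
  qed
  also have "\<dots> = cos h - cos (a + 2*h)" using cos_diff_add[of a "2*h"] by (simp add: algebra_simps)
  finally show ?case using e2 by simp
qed

lemma L1: "4 * (sin (2*h))^2 * (\<Sum>k<N. (real N - real k) * sin ((4 * real k + 1) * h))
   = sin h * (1 + 4 * real N * (cos h)^2) - sin ((4 * real N + 1) * (h::real))"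
proof (induction N)
  case 0
  then show ?case by simp
next
  case (Suc N)
  have sp: "(\<Sum>k<Suc N. (real (Suc N) - real k) * sin ((4 * real k + 1) * h))
     = (\<Sum>k<N. (real N - real k) * sin ((4 * real k + 1) * h)) + (\<Sum>k<Suc N. sin ((4 * real k + 1) * h))"
  proof -
    have "(\<Sum>k<N. (real (Suc N) - real k) * sin ((4 * real k + 1) * h))
       = (\<Sum>k<N. (real N - real k) * sin ((4 * real k + 1) * h) + sin ((4 * real k + 1) * h))"
      by (intro sum.cong) (auto simp: algebra_simps)
    then show ?thesis by (simp add: sum.distrib)
  qed
  define a where "a = (4 * real N + 3) * h"
  have e1: "(4 * real N + 1) * h = a - 2*h" unfolding a_def by (simp add: algebra_simps)
  have e2: "(4 * real (Suc N) + 1) * h = a + 2*h" unfolding a_def by (simp add: algebra_simps)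
  have e3: "(4 * real (Suc N) - 1) * h = a" unfolding a_def by (simp add: algebra_simps)
  have s2: "sin (2*h) = 2 * sin h * cos h" by (rule sin_double)
  have "4 * (sin (2*h))^2 * (\<Sum>k<Suc N. (real (Suc N) - real k) * sin ((4 * real k + 1) * h))
     = (sin h * (1 + 4 * real N * (cos h)^2) - sin (a - 2*h))
       + 2 * sin (2*h) * (2 * sin (2*h) * (\<Sum>k<Suc N. sin ((4 * real k + 1) * h)))"
    unfolding sp using Suc.IH[unfolded e1] by (simp add: algebra_simps power2_eq_square)
  also have "\<dots> = (sin h * (1 + 4 * real N * (cos h)^2) - sin (a - 2*h))
       + 2 * sin (2*h) * (cos h - cos a)"
    using L0[of h "Suc N"] e3 by simp
  also have "\<dots> = sin h * (1 + 4 * real (Suc N) * (cos h)^2) - sin (a + 2*h)"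
    using sin_add_diff[of a "2*h"] s2 by (simp add: algebra_simps power2_eq_square)
  finally show ?case using e2 by simp
qed

lemma L2: "(2 * real K + 1) * sin h - sin ((2 * real K + 1) * h) = 4 * sin h * (\<Sum>k\<in>{1..K}. (sin (real k * (h::real)))^2)"
proof (induction K)
  case 0
  then show ?case by simp
next
  case (Suc K)
  define b where "b = real (Suc K) * h"
  have e1: "(2 * real K + 1) * h = 2*b - h" unfolding b_def by (simp add: algebra_simps)
  have e2: "(2 * real (Suc K) + 1) * h = 2*b + h" unfolding b_def by (simp add: algebra_simps)
  have c2: "cos (2*b) = 1 - 2 * (sin b)^2" by (simp add: cos_double_sin)
  have c2x: "sin h * cos (2*b) = sin h - 2 * sin h * (sin b)^2" unfolding c2 by (simp add: algebra_simps)
  have "(2 * real (Suc K) + 1) * sin h - sin ((2 * real (Suc K) + 1) * h)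
     = ((2 * real K + 1) * sin h - sin (2*b - h)) + 2 * sin h - (sin (2*b+h) - sin (2*b - h))"
    unfolding e2 by (simp add: algebra_simps)
  also have "\<dots> = 4 * sin h * (\<Sum>k\<in>{1..K}. (sin (real k * h))^2) + 4 * sin h * (sin b)^2"
    using Suc.IH[unfolded e1] sin_add_diff[of "2*b" h] c2x by (simp add: algebra_simps)
  finally show ?case by (simp add: b_def algebra_simps)
qed

lemma abs_sin_mult: "\<bar>sin (real m * y)\<bar> \<le> real m * \<bar>sin (y::real)\<bar>"
proof (induction m)
  case 0
  then show ?case by simp
next
  case (Suc m)
  have "sin (real (Suc m) * y) = sin (real m * y) * cos y + cos (real m * y) * sin y"
    by (simp add: distrib_right sin_add)
  then have "\<bar>sin (real (Suc m) * y)\<bar> \<le> \<bar>sin (real m * y)\<bar> * \<bar>cos y\<bar> + \<bar>cos (real m * y)\<bar> * \<bar>sin y\<bar>"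
    by (metis abs_mult abs_triangle_ineq)
  also have "\<dots> \<le> \<bar>sin (real m * y)\<bar> + \<bar>sin y\<bar>"
    by (intro add_mono mult_left_le mult_left_le_one_le) (auto simp: abs_cos_le_one)
  finally show ?case using Suc.IH by (simp add: algebra_simps)
qed

lemma L3:
  assumes h: "0 < h" "h < pi/2" and N: "N \<ge> 1"
  shows "sin h * (1 + 4 * real N * (cos h)^2) - sin ((4 * real N + 1) * h) > 0"
proof -
  define s where "s = sin h"
  define c where "c = cos h"
  have s0: "s > 0" unfolding s_def using h by (intro sin_gt_zero) auto
  have c0: "c > 0" unfolding c_def using h by (intro cos_gt_zero) auto
  have sc: "s^2 + c^2 = 1" unfolding s_def c_def by simp
  have c2: "c^2 = 1 - s^2" using sc by simp
  have s1: "s < 1"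
  proof -
    have "s^2 < 1" using sc c0 by (smt (verit) zero_less_power)
    then show ?thesis using s0 by (smt (verit) power2_eq_square mult_le_cancel_left1)
  qed
  have Nr: "real N \<ge> 1" using N by simp
  show ?thesis
  proof (cases "4 * real N * s \<ge> 1")
    case True
    have eq: "s * (1 + 4 * real N * c^2) - 1 = (1 - s) * (4 * real N * s^2 + 4 * real N * s - 1)"
      unfolding c2 by (simp add: algebra_simps power2_eq_square)
    have p: "4 * real N * s^2 > 0" using s0 Nr by simp
    have "(1 - s) * (4 * real N * s^2 + 4 * real N * s - 1) > 0"
      using s1 p True by (intro mult_pos_pos) auto
    then have "s * (1 + 4 * real N * c^2) > 1" using eq by simp
    moreover have "sin ((4 * real N + 1) * h) \<le> 1" by (rule sin_le_one)
    ultimately show ?thesis unfolding s_def c_def by linarith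
  next
    case False
    have hb: "2 * real N * h \<le> pi / 2"
    proof (rule ccontr)
      assume "\<not> ?thesis"
      then have lt: "pi / (4 * real N) < h" using Nr by (simp add: field_simps)
      define y where "y = pi / (4 * real N)"
      have y0: "0 < y" unfolding y_def using Nr by simp
      have yh: "y < h" using lt unfolding y_def .
      have "sin y \<le> sin h" using lt h y0 unfolding y_def
        by (subst sin_mono_le_eq) auto
      have "real (2*N) * y = pi/2" unfolding y_def using Nr by (simp add: field_simps)
      then have "sin (real (2*N) * y) = 1" by (simp only: sin_pi_half)
      then have "1 \<le> real (2*N) * \<bar>sin y\<bar>" using abs_sin_mult[of "2*N" y] by (simp only:)
      also have "\<dots> = 2 * real N * sin y" using y0 yh sin_gt_zero[of y] h by auto
      finally have A: "1 \<le> 2 * real N * sin y" .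
      have "2 * real N * sin y \<le> 2 * real N * sin h"
        using \<open>sin y \<le> sin h\<close> Nr by (intro mult_left_mono) auto
      then show False using A False Nr s0 unfolding s_def by linarith
    qed
    have each: "(sin (real k * h))^2 \<ge> s^2" if k: "k \<in> {1..2*N}" for k
    proof -
      have kb: "real k * h \<le> 2 * real N * h" using k h by (intro mult_right_mono) auto
      have k1: "h \<le> real k * h" using k h by (simp add: mult_le_cancel_right1)
      have u1: "real k * h \<le> pi/2" using kb hb by linarith
      have u2: "-(pi/2) \<le> real k * h" using k1 h pi_gt_zero by linarith
      have u3: "-(pi/2) \<le> h" using h pi_gt_zero by linarith
      have "s \<le> sin (real k * h)" unfolding s_def using sin_mono_le_eq[OF u3 _ u2 u1] k1 h
        by simp
      then show ?thesis using s0 by (intro power_mono) auto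
    qed
    have "(\<Sum>k\<in>{1..2*N}. (sin (real k * h))^2) \<ge> (\<Sum>k\<in>{1..2*N}. s^2)"
      using each by (intro sum_mono) auto
    then have sm: "(\<Sum>k\<in>{1..2*N}. (sin (real k * h))^2) \<ge> 2 * real N * s^2" by simp
    have L: "(2 * real (2*N) + 1) * s - sin ((2 * real (2*N) + 1) * h) = 4 * s * (\<Sum>k\<in>{1..2*N}. (sin (real k * h))^2)"
      using L2[of "2*N" h] unfolding s_def by simp
    have "4 * s * (\<Sum>k\<in>{1..2*N}. (sin (real k * h))^2) \<ge> 4 * s * (2 * real N * s^2)"
      using sm s0 by (intro mult_left_mono) auto
    moreover have "s * (1 + 4 * real N * c^2) = (4 * real N + 1) * s - 4 * real N * s^3"
      unfolding c2 by (simp add: algebra_simps power2_eq_square power3_eq_cube)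
    moreover have "real N * s^3 > 0" using s0 Nr by simp
    ultimately show ?thesis using L unfolding s_def c_def
      by (simp add: algebra_simps power2_eq_square power3_eq_cube)
  qed
qed

theorem mainTheorem4:
  fixes n :: nat and x :: real
  assumes "0 < x" and "x < pi"
  shows "(\<Sum>k = 0..n. (real n - real k + 1) * sin ((2 * real k + 1/2) * x)) > 0"
proof -
  define h where "h = x / 2"
  have xe: "x = 2 * h" unfolding h_def by simp
  have S: "(\<Sum>k = 0..n. (real n - real k + 1) * sin ((2 * real k + 1/2) * x))
      = (\<Sum>k<Suc n. (real (Suc n) - real k) * sin ((4 * real k + 1) * h))"
    unfolding atLeast0AtMost lessThan_Suc_atMost[symmetric] xe
    by (intro sum.cong) (auto simp: algebra_simps)
  have "sin h * (1 + 4 * real (Suc n) * (cos h)^2) - sin ((4 * real (Suc n) + 1) * h) > 0"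
    using assms by (intro L3) (auto simp: h_def)
  then have pos: "4 * (sin (2*h))^2 * (\<Sum>k<Suc n. (real (Suc n) - real k) * sin ((4 * real k + 1) * h)) > 0"
    using L1[of h "Suc n"] by linarith
  have "sin (2*h) > 0" using assms xe by (intro sin_gt_zero) auto
  then have "4 * (sin (2*h))^2 > 0" by simp
  then have "0 < (\<Sum>k<Suc n. (real (Suc n) - real k) * sin ((4 * real k + 1) * h))"
    using pos zero_less_mult_pos by blast
  then show ?thesis using S by simp
qed

end
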